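(* Let $a_{11},a_{12},a_{21},a_{22}\in\mathbb{R}$, $\sigma_x,\sigma_y>0$ be fixed with $a_{22}<0$ and $a_{11}a_{22}-a_{12}a_{21}>0$; set $\tilde a:=a_{11}-a_{12}a_{21}/a_{22}$. For $\epsilon>0$ let $A_\epsilon=\begin{pmatrix} a_{11} & a_{12}\\ a_{21}/\epsilon & a_{22}/\epsilon\end{pmatrix}$, $Q=\begin{pmatrix}\sigma_x^2&0\\0&\sigma_y^2/\epsilon\end{pmatrix}$, and for $\epsilon$ small enough let $\Sigma=(\Sigma_{ij})$ be the unique solution of the Lyapunov equation $A_\epsilon\Sigma+\Sigma A_\epsilon^{\top}=-Q$, and let $\lambda_1,\lambda_2$ be the real eigenvalues $\lambda_{1,2}=\frac12\big(a_{11}+\frac{a_{22}}{\epsilon}\pm\sqrt{\Delta}\big)$ with $\Delta=(a_{11}+a_{22}/\epsilon)^2-4a_{22}\tilde a/\epsilon$. Define $$\hat b:=\lambda_1,\qquad \hat\sigma^2:=-2\lambda_1\,\frac{\Sigma_{11}(\lambda_2-a_{11})-\Sigma_{21}a_{12}}{\lambda_2-\lambda_1}.$$ Then, as $\epsilon\to0^+$, $$\hat b=\tilde a-\frac{a_{12}a_{21}\tilde a}{a_{22}^2}\epsilon+O(\epsilon^2),\qquad \hat\sigma^2=\sigma_x^2-\frac{2\sigma_x^2a_{12}a_{21}-\sigma_y^2a_{12}^2}{a_{22}^2}\,\epsilon+O(\epsilon^2).$$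
   Context: $\Sigma$ is the stationary covariance matrix of the two-dimensional Ornstein–Uhlenbeck process $\dot x=a_{11}x+a_{12}y+\sigma_x\dot W_x$, $\dot y=\frac1\epsilon(a_{21}x+a_{22}y)+\frac{\sigma_y}{\sqrt\epsilon}\dot W_y$ with independent standard Wiener processes $W_x,W_y$. *)

theory Defs
  imports "HOL-Analysis.Analysis" "HOL-Library.Landau_Symbols"
begin

definition A_eps :: "real \<Rightarrow> real \<Rightarrow> real \<Rightarrow> real \<Rightarrow> real \<Rightarrow> real^2^2" where
  "A_eps a11 a12 a21 a22 \<epsilon> =
     vector [vector [a11, a12], vector [a21 / \<epsilon>, a22 / \<epsilon>]]"

definition Q_eps :: "real \<Rightarrow> real \<Rightarrow> real \<Rightarrow> real^2^2" where
  "Q_eps sx sy \<epsilon> = vector [vector [sx^2, 0], vector [0, sy^2 / \<epsilon>]]"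

definition lyap :: "real^2^2 \<Rightarrow> real^2^2 \<Rightarrow> real^2^2 \<Rightarrow> bool" where
  "lyap A Q S \<longleftrightarrow> A ** S + S ** transpose A = - Q"

definition Sigma_eps :: "real \<Rightarrow> real \<Rightarrow> real \<Rightarrow> real \<Rightarrow> real \<Rightarrow> real \<Rightarrow> real \<Rightarrow> real^2^2" where
  "Sigma_eps a11 a12 a21 a22 sx sy \<epsilon> =
     (THE S. lyap (A_eps a11 a12 a21 a22 \<epsilon>) (Q_eps sx sy \<epsilon>) S)"

definition a_tilde :: "real \<Rightarrow> real \<Rightarrow> real \<Rightarrow> real \<Rightarrow> real" where
  "a_tilde a11 a12 a21 a22 = a11 - a12 * a21 / a22"

definition Delta_eps :: "real \<Rightarrow> real \<Rightarrow> real \<Rightarrow> real \<Rightarrow> real \<Rightarrow> real" where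
  "Delta_eps a11 a12 a21 a22 \<epsilon> =
     (a11 + a22 / \<epsilon>)^2 - 4 * a22 * a_tilde a11 a12 a21 a22 / \<epsilon>"

definition lambda1 :: "real \<Rightarrow> real \<Rightarrow> real \<Rightarrow> real \<Rightarrow> real \<Rightarrow> real" where
  "lambda1 a11 a12 a21 a22 \<epsilon> = (a11 + a22 / \<epsilon> + sqrt (Delta_eps a11 a12 a21 a22 \<epsilon>)) / 2"

definition lambda2 :: "real \<Rightarrow> real \<Rightarrow> real \<Rightarrow> real \<Rightarrow> real \<Rightarrow> real" where
  "lambda2 a11 a12 a21 a22 \<epsilon> = (a11 + a22 / \<epsilon> - sqrt (Delta_eps a11 a12 a21 a22 \<epsilon>)) / 2"

definition b_hat :: "real \<Rightarrow> real \<Rightarrow> real \<Rightarrow> real \<Rightarrow> real \<Rightarrow> real" where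
  "b_hat a11 a12 a21 a22 \<epsilon> = lambda1 a11 a12 a21 a22 \<epsilon>"

definition sigma2_hat :: "real \<Rightarrow> real \<Rightarrow> real \<Rightarrow> real \<Rightarrow> real \<Rightarrow> real \<Rightarrow> real \<Rightarrow> real" where
  "sigma2_hat a11 a12 a21 a22 sx sy \<epsilon> =
     (let l1 = lambda1 a11 a12 a21 a22 \<epsilon>; l2 = lambda2 a11 a12 a21 a22 \<epsilon>;
          S = Sigma_eps a11 a12 a21 a22 sx sy \<epsilon>
      in -2 * l1 * ((S$1$1) * (l2 - a11) - (S$2$1) * a12) / (l2 - l1))"

end

theory Submission
  imports Defs
begin


lemma lyap_iff:
  fixes a b c d q1 q2 :: real
  shows "lyap (vector [vector [a,b], vector [c,d]]) (vector [vector [q1,0], vector [0,q2]]) S \<longleftrightarrow>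
   (2*a*S$1$1 + b*(S$1$2 + S$2$1) = -q1 \<and> a*S$1$2 + b*S$2$2 + c*S$1$1 + d*S$1$2 = 0 \<and>
    c*S$1$1 + d*S$2$1 + a*S$2$1 + b*S$2$2 = 0 \<and> c*(S$1$2+S$2$1) + 2*d*S$2$2 = -q2)"
  unfolding lyap_def vec_eq_iff forall_2 matrix_matrix_mult_def transpose_def sum_2
  by (simp add: algebra_simps) 

lemma lyap_unique:
  fixes a b c d q1 q2 :: real
  assumes T: "a + d \<noteq> 0" and D: "a*d - b*c \<noteq> 0"
  shows "lyap (vector [vector [a,b], vector [c,d]]) (vector [vector [q1,0], vector [0,q2]]) S \<longleftrightarrow>
    S = vector [vector [- ((a*d-b*c + d^2)*q1 + b^2*q2) / (2*(a+d)*(a*d-b*c)),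
                        (d*c*q1 + a*b*q2) / (2*(a+d)*(a*d-b*c))],
                vector [(d*c*q1 + a*b*q2) / (2*(a+d)*(a*d-b*c)),
                        - ((a*d-b*c + a^2)*q2 + c^2*q1) / (2*(a+d)*(a*d-b*c))]]" (is "?L \<longleftrightarrow> S = ?S")
proof
  assume "lyap (vector [vector [a,b], vector [c,d]]) (vector [vector [q1,0], vector [0,q2]]) S"
  then have e: "2*a*S$1$1 + b*(S$1$2 + S$2$1) = -q1" "a*S$1$2 + b*S$2$2 + c*S$1$1 + d*S$1$2 = 0"
    "c*S$1$1 + d*S$2$1 + a*S$2$1 + b*S$2$2 = 0" "c*(S$1$2+S$2$1) + 2*d*S$2$2 = -q2"
    by (simp_all add: lyap_iff)
  have "(a+d)*(S$1$2 - S$2$1) = 0" using e(2,3) by (simp add: algebra_simps)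
  hence sym: "S$2$1 = S$1$2" using T by simp
  have h11: "2*(a+d)*(a*d-b*c) * S$1$1 = - ((a*d-b*c + d^2)*q1 + b^2*q2)"
    using e sym by algebra
  have h12: "2*(a+d)*(a*d-b*c) * S$1$2 = (d*c*q1 + a*b*q2)"
    using e sym by algebra
  have h22: "2*(a+d)*(a*d-b*c) * S$2$2 = - ((a*d-b*c + a^2)*q2 + c^2*q1)"
    using e sym by algebra
  have nz: "2*(a+d)*(a*d-b*c) \<noteq> 0" using T D by simp
  show "S = ?S"
    unfolding vec_eq_iff forall_2 using h11 h12 h22 sym nz
    by (simp add: field_simps)
next
  assume S: "S = ?S"
  show ?L
  proof -
    define k where "k = 2*(a+d)*(a*d-b*c)"
    have nz: "k \<noteq> 0" using T D by (simp add: k_def)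
    have SS: "S = vector [vector [- ((a*d-b*c + d^2)*q1 + b^2*q2) / k, (d*c*q1 + a*b*q2) / k],
                vector [(d*c*q1 + a*b*q2) / k, - ((a*d-b*c + a^2)*q2 + c^2*q1) / k]]"
      using S by (simp add: k_def)
    show ?thesis unfolding lyap_iff SS vector_2 using nz
      apply (simp add: field_simps)
      apply (simp add: k_def)
      apply (intro conjI; algebra)
      done
  qed
qed


definition "pp a11 a12 a21 a22 e = a_tilde a11 a12 a21 a22 - a12 * a21 * a_tilde a11 a12 a21 a22 / a22^2 * (e::real)"
definition "RR1 a11 a12 a21 a22 e = (-2 * a12^3 * a21^3 / (a22^4) + a12^4 * a21^4 * e / (a22^6) + 3 * a11 * a12^2 * a21^2 / (a22^3) - 2 * a11 * a12^3 * a21^3 * e / (a22^5) - a11^2 * a12 * a21 / (a22^2) + a11^2 * a12^2 * a21^2 * e / (a22^4))"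
definition "RR a11 a12 a21 a22 sx sy e = (-3 * a12^3 * a21^3 * sx^2 / (a22^2) + 2 * a12^4 * a21^2 * sy^2 / (a22^2) + a12^4 * a21^4 * sx^2 * e / (a22^4) + a12^5 * a21^5 * sx^2 * e^2 / (a22^6) - a12^6 * a21^4 * sy^2 * e^2 / (a22^6) + 4 * a11 * a12^2 * a21^2 * sx^2 / (a22^1) - 2 * a11 * a12^3 * a21 * sy^2 / (a22^1) - 6 * a11 * a12^3 * a21^3 * sx^2 * e / (a22^3) + 3 * a11 * a12^4 * a21^2 * sy^2 * e / (a22^3) + a11 * a12^4 * a21^4 * sx^2 * e^2 / (a22^5) - a11^2 * a12 * a21 * sx^2 + 7 * a11^2 * a12^2 * a21^2 * sx^2 * e / (a22^2) - 4 * a11^2 * a12^3 * a21 * sy^2 * e / (a22^2) - 5 * a11^2 * a12^3 * a21^3 * sx^2 * e^2 / (a22^4) + 3 * a11^2 * a12^4 * a21^2 * sy^2 * e^2 / (a22^4) - 2 * a11^3 * a12 * a21 * sx^2 * e / (a22^1) + a11^3 * a12^2 * sy^2 * e / (a22^1) + 3 * a11^3 * a12^2 * a21^2 * sx^2 * e^2 / (a22^3) - 2 * a11^3 * a12^3 * a21 * sy^2 * e^2 / (a22^3))"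
definition "PP11 a11 a12 a21 a22 sx sy e = -((e*(a11*a22-a12*a21) + a22^2)* sx^2 + e*a12^2* sy^2)"
definition "PP21 a11 a12 a21 a22 sx sy e = a22*a21* sx^2 + e*a11*a12* sy^2"
definition "tau a12 a21 a22 sx sy e = sx^2 - (2 * sx^2 * a12 * a21 - sy^2 * a12^2) / a22^2 * (e::real)"

lemma R1_id:
  fixes a11 a12 a21 a22 e :: real
  assumes "a22 \<noteq> 0"
  shows "e*(pp a11 a12 a21 a22 e)^2 - (e*a11+a22)*pp a11 a12 a21 a22 e + (a11*a22-a12*a21) = e^2 * RR1 a11 a12 a21 a22 e"
  using assms unfolding pp_def RR1_def a_tilde_def
  by (simp add: field_simps) algebra

lemma R_id:
  fixes a11 a12 a21 a22 sx sy e :: real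
  assumes "a22 \<noteq> 0"
  shows "-(pp a11 a12 a21 a22 e)*(PP11 a11 a12 a21 a22 sx sy e*(a22 - e*pp a11 a12 a21 a22 e) - e*a12*PP21 a11 a12 a21 a22 sx sy e)
     - tau a12 a21 a22 sx sy e*(e*a11+a22)*(a11*a22-a12*a21)*((e*a11+a22) - 2*e*pp a11 a12 a21 a22 e) = e^2 * RR a11 a12 a21 a22 sx sy e"
  using assms unfolding pp_def RR_def a_tilde_def PP11_def PP21_def tau_def
  by (simp add: field_simps) algebra



lemma H0_diff:
  fixes s11 s21 a22 a12 u e x p :: real
  assumes "u - 2*e*x \<noteq> 0" "u - 2*e*p \<noteq> 0"
  shows "-2*x*(s11*(a22 - e*x) - e* s21*a12)/(u - 2*e*x) - (-2*p*(s11*(a22 - e*p) - e* s21*a12)/(u - 2*e*p))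
    = (x - p) * ((-2*(s11*a22 - e* s21*a12)*u + 2* s11*u*(e*x + e*p) - 4* s11*(e*x)*(e*p)) / ((u - 2*e*x)*(u - 2*e*p)))"
  using assms by (simp add: field_simps)

lemma quad_diff:
  fixes e x p u D R1 :: real
  assumes "e*x^2 - u*x + D = 0" "e*p^2 - u*p + D = e^2*R1" "e*p + e*x - u \<noteq> 0"
  shows "x - p = e^2 * (-R1/(e*p + e*x - u))"
proof -
  have "(p - x)*(e*p + e*x - u) = e^2*R1" using assms(1,2) by algebra
  thus ?thesis using assms(3) by (simp add: field_simps)
qed

lemma Hp_diff:
  fixes A B p t u D e R a22 a12 :: real
  assumes "-p*(A*(a22 - e*p) - e*a12*B) - t*u*D*(u - 2*e*p) = e^2*R"
    "u \<noteq> 0" "D \<noteq> 0" "u - 2*e*p \<noteq> 0"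
  shows "-2*p*((A/(2*u*D))*(a22 - e*p) - e*(B/(2*u*D))*a12)/(u - 2*e*p) - t = e^2 * (R/(u*D*(u - 2*e*p)))"
proof -
  have "-2*p*((A/(2*u*D))*(a22 - e*p) - e*(B/(2*u*D))*a12)/(u - 2*e*p) - t
      = (-p*(A*(a22 - e*p) - e*a12*B) - t*u*D*(u - 2*e*p)) / (u*D*(u - 2*e*p))"
    using assms(2-4) by (simp add: field_simps)
  also have "\<dots> = e^2 * (R/(u*D*(u - 2*e*p)))" using assms(1) by simp
  finally show ?thesis .
qed

lemma per_e:
  fixes a11 a12 a21 a22 sx sy e :: real
  assumes a22: "a22 < 0" and D0: "a11*a22 - a12*a21 > 0" and e: "e > 0" and u: "e*a11 + a22 < 0"
    and dsc: "(e*a11+a22)^2 - 4*e*(a11*a22 - a12*a21) > 0"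
  shows "e * lambda1 a11 a12 a21 a22 e = ((e*a11+a22) + sqrt((e*a11+a22)^2 - 4*e*(a11*a22 - a12*a21)))/2"
   and "e*(lambda1 a11 a12 a21 a22 e)^2 - (e*a11+a22)*lambda1 a11 a12 a21 a22 e + (a11*a22-a12*a21) = 0"
   and "\<exists>!S. lyap (A_eps a11 a12 a21 a22 e) (Q_eps sx sy e) S"
   and "sigma2_hat a11 a12 a21 a22 sx sy e =
        -2*lambda1 a11 a12 a21 a22 e*((PP11 a11 a12 a21 a22 sx sy e/(2*(e*a11+a22)*(a11*a22-a12*a21)))*(a22 - e*lambda1 a11 a12 a21 a22 e)
          - e*(PP21 a11 a12 a21 a22 sx sy e/(2*(e*a11+a22)*(a11*a22-a12*a21)))*a12)/((e*a11+a22) - 2*e*lambda1 a11 a12 a21 a22 e)"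
proof -
  define D where "D = a11*a22 - a12*a21"
  define u where "u = e*a11+a22"
  define s where "s = sqrt(u^2 - 4*e*D)"
  have s2: "s^2 = u^2 - 4*e*D" unfolding s_def using dsc by (simp add: D_def u_def)
  have a22n: "a22 \<noteq> 0" using a22 by simp
  have Dl: "Delta_eps a11 a12 a21 a22 e = (u^2 - 4*e*D)/e^2"
    unfolding Delta_eps_def a_tilde_def u_def D_def using e a22n by (simp add: field_simps) algebra
  have sq: "sqrt (Delta_eps a11 a12 a21 a22 e) = s/e"
    unfolding Dl s_def using e by (simp add: real_sqrt_divide)
  have l1: "lambda1 a11 a12 a21 a22 e = (u + s)/(2*e)"
    unfolding lambda1_def sq u_def using e by (simp add: field_simps)
  have l2: "lambda2 a11 a12 a21 a22 e = (u - s)/(2*e)"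
    unfolding lambda2_def sq u_def using e by (simp add: field_simps)
  show 1: "e * lambda1 a11 a12 a21 a22 e = ((e*a11+a22) + sqrt((e*a11+a22)^2 - 4*e*(a11*a22 - a12*a21)))/2"
    unfolding l1 using e by (simp add: s_def u_def D_def)
  show 2: "e*(lambda1 a11 a12 a21 a22 e)^2 - (e*a11+a22)*lambda1 a11 a12 a21 a22 e + (a11*a22-a12*a21) = 0"
    unfolding l1 u_def[symmetric] D_def[symmetric] using e s2 by (simp add: field_simps power2_eq_square) algebra
  have T: "a11 + a22/e \<noteq> 0" using e u by (simp add: field_simps)
  have Dn: "a11*(a22/e) - a12*(a21/e) \<noteq> 0" using e D0 by (simp add: field_simps)
  have AQ: "A_eps a11 a12 a21 a22 e = vector [vector [a11,a12], vector [a21/e,a22/e]]"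
           "Q_eps sx sy e = vector [vector [sx^2,0], vector [0,sy^2/e]]"
    unfolding A_eps_def Q_eps_def by simp_all
  note LU = lyap_unique[OF T Dn, of "sx^2" "sy^2/e", folded AQ]
  show ex: "\<exists>!S. lyap (A_eps a11 a12 a21 a22 e) (Q_eps sx sy e) S"
    unfolding LU by simp
  have "lyap (A_eps a11 a12 a21 a22 e) (Q_eps sx sy e) (Sigma_eps a11 a12 a21 a22 sx sy e)"
    unfolding Sigma_eps_def by (rule theI'[OF ex])
  note Sig = this[unfolded LU]
  have den: "2*(a11+a22/e)*(a11*(a22/e) - a12*(a21/e)) = 2*u*D/e^2"
    using e by (simp add: field_simps u_def D_def power2_eq_square)
  have un: "u \<noteq> 0" using u by (simp add: u_def)
  have Dnz: "D \<noteq> 0" using D0 by (simp add: D_def)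
  have S11: "Sigma_eps a11 a12 a21 a22 sx sy e $1$1 = PP11 a11 a12 a21 a22 sx sy e/(2*u*D)"
    unfolding Sig vector_2 den using e un Dnz
    apply (simp add: field_simps)
    apply (simp add: PP11_def u_def D_def)
    apply algebra
    done
  have S21: "Sigma_eps a11 a12 a21 a22 sx sy e $2$1 = PP21 a11 a12 a21 a22 sx sy e/(2*u*D)"
    unfolding Sig vector_2 den using e un Dnz
    apply (simp add: field_simps)
    apply (simp add: PP21_def u_def D_def)
    apply algebra
    done
  have sne: "s > 0" unfolding s_def using dsc by (simp add: u_def D_def)
  show "sigma2_hat a11 a12 a21 a22 sx sy e =
        -2*lambda1 a11 a12 a21 a22 e*((PP11 a11 a12 a21 a22 sx sy e/(2*(e*a11+a22)*(a11*a22-a12*a21)))*(a22 - e*lambda1 a11 a12 a21 a22 e)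
          - e*(PP21 a11 a12 a21 a22 sx sy e/(2*(e*a11+a22)*(a11*a22-a12*a21)))*a12)/((e*a11+a22) - 2*e*lambda1 a11 a12 a21 a22 e)"
    unfolding sigma2_hat_def Let_def S11 S21 l1 l2 u_def[symmetric] D_def[symmetric]
    using e sne un Dnz
    apply (simp add: field_simps)
    apply (simp add: u_def)
    apply algebra
    done
qed



lemma bigo_sq:
  fixes f g :: "real \<Rightarrow> real"
  assumes "eventually (\<lambda>e. f e = e^2 * g e) (at_right 0)" "(g \<longlongrightarrow> c) (at_right 0)"
  shows "f \<in> O[at_right 0](\<lambda>e. e^2)"
proof (rule bigoI_tendsto[where c=c])
  have "eventually (\<lambda>e. g e = f e / e^2) (at_right 0)"
    using assms(1) eventually_at_right_less[of "0::real"] by eventually_elim simp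
  thus "((\<lambda>e. f e / e^2) \<longlongrightarrow> c) (at_right 0)"
    by (rule Lim_transform_eventually[OF assms(2)])
  show "eventually (\<lambda>e::real. e^2 \<noteq> 0) (at_right 0)"
    using eventually_at_right_less[of "0::real"] by eventually_elim simp
qed

theorem mainTheorem2:
  fixes a11 a12 a21 a22 sx sy :: real
  assumes "sx > 0" and "sy > 0" and "a22 < 0" and "a11 * a22 - a12 * a21 > 0"
  shows "(\<forall>\<^sub>F \<epsilon> in at_right 0.
            \<exists>!S. lyap (A_eps a11 a12 a21 a22 \<epsilon>) (Q_eps sx sy \<epsilon>) S)
       \<and> (\<lambda>\<epsilon>. b_hat a11 a12 a21 a22 \<epsilon>
              - (a_tilde a11 a12 a21 a22
                 - a12 * a21 * a_tilde a11 a12 a21 a22 / a22^2 * \<epsilon>))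
           \<in> O[at_right 0](\<lambda>\<epsilon>. \<epsilon>^2)
       \<and> (\<lambda>\<epsilon>. sigma2_hat a11 a12 a21 a22 sx sy \<epsilon>
              - (sx^2 - (2 * sx^2 * a12 * a21 - sy^2 * a12^2) / a22^2 * \<epsilon>))
           \<in> O[at_right 0](\<lambda>\<epsilon>. \<epsilon>^2)"
proof -
  note a22 = assms(3) and D0 = assms(4)
  have a22n: "a22 \<noteq> 0" using a22 by simp
  define D where "D = a11*a22 - a12*a21"
  have Dp: "D > 0" using D0 by (simp add: D_def)
  define u where "u = (\<lambda>e::real. e*a11 + a22)"
  define dsc where "dsc = (\<lambda>e::real. (e*a11+a22)^2 - 4*e*(a11*a22 - a12*a21))"
  define x where "x = (\<lambda>e. lambda1 a11 a12 a21 a22 e)"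
  define y where "y = (\<lambda>e. e * x e)"
  define p where "p = (\<lambda>e. pp a11 a12 a21 a22 e)"
  define S11 where "S11 = (\<lambda>e. PP11 a11 a12 a21 a22 sx sy e/(2*(e*a11+a22)*(a11*a22-a12*a21)))"
  define S21 where "S21 = (\<lambda>e. PP21 a11 a12 a21 a22 sx sy e/(2*(e*a11+a22)*(a11*a22-a12*a21)))"
  define r1 where "r1 = (\<lambda>e. RR1 a11 a12 a21 a22 e)"
  define r where "r = (\<lambda>e. RR a11 a12 a21 a22 sx sy e)"
  have lim_u: "(u \<longlongrightarrow> a22) (at_right 0)" unfolding u_def by (auto intro!: tendsto_eq_intros)
  have lim_dsc: "(dsc \<longlongrightarrow> a22^2) (at_right 0)" unfolding dsc_def by (auto intro!: tendsto_eq_intros)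
  have ev_pos: "eventually (\<lambda>e. e > 0) (at_right (0::real))" by (rule eventually_at_right_less)
  have ev_u: "eventually (\<lambda>e. u e < 0) (at_right 0)" using order_tendstoD(2)[OF lim_u] a22 by simp
  have ev_dsc: "eventually (\<lambda>e. dsc e > 0) (at_right 0)" using order_tendstoD(1)[OF lim_dsc] a22n by simp
  have ev_good: "eventually (\<lambda>e. e > 0 \<and> u e < 0 \<and> dsc e > 0) (at_right 0)"
    using ev_pos ev_u ev_dsc by eventually_elim simp
  have ev_y: "eventually (\<lambda>e. y e = (u e + sqrt (dsc e))/2) (at_right 0)"
    using ev_good by eventually_elim (use per_e(1)[OF a22 D0] in \<open>auto simp: y_def x_def u_def dsc_def\<close>)
  have "((\<lambda>e. (u e + sqrt (dsc e))/2) \<longlongrightarrow> (a22 + sqrt (a22^2))/2) (at_right 0)"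
    by (intro tendsto_intros lim_u lim_dsc) simp_all
  hence lim0: "((\<lambda>e. (u e + sqrt (dsc e))/2) \<longlongrightarrow> 0) (at_right 0)"
    using a22 by simp
  have "eventually (\<lambda>e. (u e + sqrt (dsc e))/2 = y e) (at_right 0)"
    using ev_y by eventually_elim simp
  then have lim_y: "(y \<longlongrightarrow> 0) (at_right 0)"
    by (rule Lim_transform_eventually[OF lim0])
  have lim_p: "(p \<longlongrightarrow> p 0) (at_right 0)"
    unfolding p_def pp_def using a22n by (auto intro!: tendsto_eq_intros)
  have lim_ep: "((\<lambda>e. e * p e) \<longlongrightarrow> 0) (at_right 0)"
    using tendsto_mult[OF tendsto_ident_at lim_p] by simp
  have lim_r1: "(r1 \<longlongrightarrow> r1 0) (at_right 0)"
    unfolding r1_def RR1_def using a22n by (auto intro!: tendsto_eq_intros)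
  have lim_r: "(r \<longlongrightarrow> r 0) (at_right 0)"
    unfolding r_def RR_def using a22n by (auto intro!: tendsto_eq_intros)
  have lim_S11: "(S11 \<longlongrightarrow> S11 0) (at_right 0)"
    unfolding S11_def PP11_def using a22n D0 by (auto intro!: tendsto_eq_intros)
  have lim_S21: "(S21 \<longlongrightarrow> S21 0) (at_right 0)"
    unfolding S21_def PP21_def using a22n D0 by (auto intro!: tendsto_eq_intros)
  have ev_d1: "eventually (\<lambda>e. e * p e + y e - u e > 0) (at_right 0)"
  proof -
    have "((\<lambda>e. e * p e + y e - u e) \<longlongrightarrow> 0 + 0 - a22) (at_right 0)"
      by (intro tendsto_intros lim_ep lim_y lim_u)
    from order_tendstoD(1)[OF this, of 0] a22 show ?thesis by simp
  qed
  have ev_d2: "eventually (\<lambda>e. u e - 2 * (e * p e) < 0) (at_right 0)"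
  proof -
    have "((\<lambda>e. u e - 2 * (e * p e)) \<longlongrightarrow> a22 - 2 * 0) (at_right 0)"
      by (intro tendsto_intros lim_ep lim_u)
    from order_tendstoD(2)[OF this, of 0] a22 show ?thesis by simp
  qed
  have ev_d3: "eventually (\<lambda>e. u e - 2 * y e < 0) (at_right 0)"
  proof -
    have "((\<lambda>e. u e - 2 * y e) \<longlongrightarrow> a22 - 2 * 0) (at_right 0)"
      by (intro tendsto_intros lim_y lim_u)
    from order_tendstoD(2)[OF this, of 0] a22 show ?thesis by simp
  qed
  have ev_all: "eventually (\<lambda>e. (e > 0 \<and> u e < 0 \<and> dsc e > 0) \<and> e * p e + y e - u e > 0
       \<and> u e - 2 * (e * p e) < 0 \<and> u e - 2 * y e < 0) (at_right 0)"
    using ev_good ev_d1 ev_d2 ev_d3 by eventually_elim blast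
  have P1: "\<forall>\<^sub>F \<epsilon> in at_right 0. \<exists>!S. lyap (A_eps a11 a12 a21 a22 \<epsilon>) (Q_eps sx sy \<epsilon>) S"
    using ev_good by eventually_elim (use per_e(3)[OF a22 D0] in \<open>auto simp: u_def dsc_def\<close>)
  have xp: "eventually (\<lambda>e. x e - p e = e^2 * (- r1 e / (e * p e + y e - u e))) (at_right 0)"
    using ev_all
  proof eventually_elim
    case (elim e)
    have q: "e*(x e)^2 - u e * x e + D = 0"
      using per_e(2)[OF a22 D0, of e] elim by (simp add: x_def u_def dsc_def D_def)
    have q2: "e*(p e)^2 - u e * p e + D = e^2 * r1 e"
      using R1_id[OF a22n, of e a11 a12 a21] by (simp add: p_def u_def r1_def D_def)
    have "x e - p e = e^2 * (- r1 e/(e * p e + e * x e - u e))"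
      by (rule quad_diff[OF q q2]) (use elim in \<open>simp add: y_def\<close>)
    thus ?case by (simp add: y_def)
  qed
  have P2: "(\<lambda>\<epsilon>. b_hat a11 a12 a21 a22 \<epsilon>
              - (a_tilde a11 a12 a21 a22
                 - a12 * a21 * a_tilde a11 a12 a21 a22 / a22^2 * \<epsilon>))
           \<in> O[at_right 0](\<lambda>\<epsilon>. \<epsilon>^2)"
  proof (rule bigo_sq)
    show "eventually (\<lambda>e. b_hat a11 a12 a21 a22 e - (a_tilde a11 a12 a21 a22
                 - a12 * a21 * a_tilde a11 a12 a21 a22 / a22^2 * e) = e^2 * (- r1 e / (e * p e + y e - u e))) (at_right 0)"
      using xp by (simp add: b_hat_def x_def p_def pp_def)
    show "((\<lambda>e. - r1 e / (e * p e + y e - u e)) \<longlongrightarrow> - r1 0 / (0 + 0 - a22)) (at_right 0)"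
      using a22n by (intro tendsto_intros lim_r1 lim_ep lim_y lim_u) simp
  qed
  define G where "G = (\<lambda>e. (-2*(S11 e*a22 - e*S21 e*a12)*u e + 2*S11 e*u e*(y e + e*p e) - 4*S11 e*(y e)*(e*p e))
       / ((u e - 2*y e)*(u e - 2*(e*p e))))"
  define E where "E = (\<lambda>e. r e/(u e*D*(u e - 2*(e*p e))))"
  have ev_sig: "eventually (\<lambda>e. sigma2_hat a11 a12 a21 a22 sx sy e
              - (sx^2 - (2 * sx^2 * a12 * a21 - sy^2 * a12^2) / a22^2 * e)
        = e^2 * ((- r1 e / (e * p e + y e - u e)) * G e + E e)) (at_right 0)"
    using ev_all xp
  proof eventually_elim
    case (elim e)
    have sig: "sigma2_hat a11 a12 a21 a22 sx sy e = -2*x e*(S11 e*(a22 - e*x e) - e*S21 e*a12)/(u e - 2*e*x e)"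
      using per_e(4)[OF a22 D0, of e sx sy] elim by (simp add: x_def u_def dsc_def S11_def S21_def)
    have hd: "-2*x e*(S11 e*(a22 - e*x e) - e*S21 e*a12)/(u e - 2*e*x e)
           - (-2*p e*(S11 e*(a22 - e*p e) - e*S21 e*a12)/(u e - 2*e*p e)) = (x e - p e) * G e"
      unfolding G_def y_def using H0_diff[of "u e" e "x e" "p e" "S11 e" a22 "S21 e" a12] elim
      by (simp add: y_def mult.assoc)
    have Rq: "-(p e)*(PP11 a11 a12 a21 a22 sx sy e*(a22 - e*p e) - e*a12*PP21 a11 a12 a21 a22 sx sy e)
        - (sx^2 - (2 * sx^2 * a12 * a21 - sy^2 * a12^2) / a22^2 * e)*u e*D*(u e - 2*e*p e) = e^2 * r e"
      using R_id[OF a22n, of a11 a12 a21 e sx sy] by (simp add: p_def u_def r_def D_def tau_def)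
    have hp: "-2*p e*(S11 e*(a22 - e*p e) - e*S21 e*a12)/(u e - 2*e*p e)
         - (sx^2 - (2 * sx^2 * a12 * a21 - sy^2 * a12^2) / a22^2 * e) = e^2 * E e"
      using Hp_diff[OF Rq] elim Dp unfolding E_def S11_def S21_def
      by (simp add: u_def D_def mult.assoc)
    show ?case using sig hd hp elim(2) by (simp add: algebra_simps)
  qed
  have P3: "(\<lambda>\<epsilon>. sigma2_hat a11 a12 a21 a22 sx sy \<epsilon>
              - (sx^2 - (2 * sx^2 * a12 * a21 - sy^2 * a12^2) / a22^2 * \<epsilon>))
           \<in> O[at_right 0](\<lambda>\<epsilon>. \<epsilon>^2)"
  proof (rule bigo_sq[OF ev_sig])
    have lG: "(G \<longlongrightarrow> (-2*(S11 0*a22 - 0*S21 0*a12)*a22 + 2*S11 0*a22*(0 + 0) - 4*S11 0*0*0)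
       / ((a22 - 2*0)*(a22 - 2*0))) (at_right 0)"
      unfolding G_def using a22n by (intro tendsto_intros lim_S11 lim_S21 lim_u lim_y lim_ep) simp
    have lE: "(E \<longlongrightarrow> r 0/(a22*D*(a22 - 2*0))) (at_right 0)"
      unfolding E_def using a22n Dp by (intro tendsto_intros lim_r lim_u lim_ep) simp
    show "((\<lambda>e. (- r1 e / (e * p e + y e - u e)) * G e + E e) \<longlongrightarrow>
        (- r1 0 / (0 + 0 - a22)) * ((-2*(S11 0*a22 - 0*S21 0*a12)*a22 + 2*S11 0*a22*(0 + 0) - 4*S11 0*0*0)
       / ((a22 - 2*0)*(a22 - 2*0))) + r 0/(a22*D*(a22 - 2*0))) (at_right 0)"
      using a22n by (intro tendsto_intros lim_r1 lim_ep lim_y lim_u lG lE) simp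
  qed
  show ?thesis using P1 P2 P3 by blast
qed

end
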